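(* If $F$ satisfies Assumption 1, then for every $v\in[0,1]$ with $F(b^*_{v,F})>0$, $$F(b^*_{v,F})\ \ge\ \frac{F(v)}{e}.$$
   Context: Assumption 1: $F$ is a cumulative distribution function on $[0,1]$ which is continuously differentiable with density $f=F'$ and is strictly log-concave (equivalently $f/F$ is strictly decreasing on $(0,1)$). $U_{v,F}(b)=(v-b)F(b)$ and $b^*_{v,F}=\max\{\operatorname{argmax}_{b\in[0,1]}U_{v,F}(b)\}$. *)

theory Defs
  imports "HOL-Analysis.Analysis"
begin

definition assumption1 :: "(real \<Rightarrow> real) \<Rightarrow> (real \<Rightarrow> real) \<Rightarrow> bool" where
  "assumption1 F f \<longleftrightarrow>
     F 0 = 0 \<and> F 1 = 1 \<and> mono_on {0..1} F \<and>
     (\<forall>x\<in>{0..1}. (F has_real_derivative f x) (at x within {0..1})) \<and>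
     continuous_on {0..1} f \<and>
     (\<forall>x\<in>{0..1}. f x \<ge> 0) \<and>
     (\<forall>x y. 0 < x \<and> x < y \<and> y < 1 \<longrightarrow> f y / F y < f x / F x)"

definition U :: "real \<Rightarrow> (real \<Rightarrow> real) \<Rightarrow> real \<Rightarrow> real" where
  "U v F b = (v - b) * F b"

definition bstar :: "real \<Rightarrow> (real \<Rightarrow> real) \<Rightarrow> real" where
  "bstar v F = (GREATEST b. b \<in> {0..1} \<and> (\<forall>c\<in>{0..1}. U v F c \<le> U v F b))"

end

theory Submission
  imports Defs
begin

theorem lemma4:
  fixes F f :: "real \<Rightarrow> real" and v :: real
  assumes "assumption1 F f"
    and "v \<in> {0..1}"
    and "F (bstar v F) > 0"
  shows "F (bstar v F) \<ge> F v / exp 1"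
proof -
  note A = assms(1)[unfolded assumption1_def]
  have F0: "F 0 = 0" and mono: "mono_on {0..1} F"
    and der: "\<And>x. x\<in>{0..1} \<Longrightarrow> (F has_real_derivative f x) (at x within {0..1})"
    and dec: "\<And>x y. 0 < x \<Longrightarrow> x < y \<Longrightarrow> y < 1 \<Longrightarrow> f y / F y < f x / F x"
    using A by auto
  have contF: "continuous_on {0..1} F" by (rule DERIV_continuous_on[OF der])
  have contU: "continuous_on {0..1} (U v F)"
    unfolding U_def by (intro continuous_intros contF)
  obtain m where m: "m \<in> {0..1}" "\<forall>c\<in>{0..1}. U v F c \<le> U v F m"
    using continuous_attains_sup[OF compact_Icc _ contU] by auto
  define S where "S = {b \<in> {0..1}. U v F b = U v F m}"
  have S_eq: "S = {b. b \<in> {0..1} \<and> (\<forall>c\<in>{0..1}. U v F c \<le> U v F b)}"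
    unfolding S_def using m by (auto intro: antisym)
  have "closed S" unfolding S_def
    by (rule continuous_closed_preimage_constant[OF contU closed_atLeastAtMost])
  moreover have "bounded S" unfolding S_def by (rule bounded_subset[of "{0..1}"]) auto
  ultimately have "compact S" using compact_eq_bounded_closed by blast
  moreover have "S \<noteq> {}" using m S_eq by auto
  ultimately obtain b where b: "b \<in> S" "\<forall>y\<in>S. y \<le> b"
    using compact_attains_sup by blast
  have bs: "bstar v F = b"
    unfolding bstar_def using b S_eq by (intro Greatest_equality) auto
  have b01: "b \<in> {0..1}" and bmax: "\<forall>c\<in>{0..1}. U v F c \<le> U v F b" using b S_eq by auto
  have Fb: "F b > 0" using assms(3) bs by simp
  show ?thesis
  proof (cases "v \<le> b")
    case True
    have "F v \<le> F b" using mono True b01 assms(2) by (auto intro: mono_onD)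
    moreover have "F 0 \<le> F v" using mono assms(2) by (auto intro: mono_onD)
    hence "F v \<ge> 0" using F0 by simp
    moreover have "1 \<le> exp (1::real)" by simp
    ultimately have "F v / exp 1 \<le> F v"
      by (simp add: divide_le_eq mult_le_cancel_left1)
    thus ?thesis using \<open>F v \<le> F b\<close> bs by simp
  next
    case False
    hence bv: "b < v" by simp
    have b0: "b > 0" using Fb F0 b01 by (cases "b = 0") auto
    have b1: "b < 1" using bv assms(2) by auto
    have derat: "\<And>x. 0 < x \<Longrightarrow> x < 1 \<Longrightarrow> (F has_real_derivative f x) (at x)"
    proof -
      fix x :: real assume "0 < x" "x < 1"
      hence "x \<in> interior {0..1}" by auto
      thus "(F has_real_derivative f x) (at x)"
        using der[of x] \<open>0<x\<close> \<open>x<1\<close> at_within_interior[of x "{0..1::real}"] by auto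
    qed
    have dU: "(U v F has_real_derivative (- F b + (v - b) * f b)) (at b)"
      unfolding U_def using derat[OF b0 b1]
      by (auto intro!: derivative_eq_intros)
    have "- F b + (v - b) * f b = 0"
    proof (rule DERIV_local_max[OF dU, of "min b (1 - b)"])
      show "0 < min b (1 - b)" using b0 b1 by simp
      show "\<forall>y. \<bar>b - y\<bar> < min b (1 - b) \<longrightarrow> U v F y \<le> U v F b"
      proof (intro allI impI)
        fix y assume "\<bar>b - y\<bar> < min b (1 - b)"
        hence "y \<in> {0..1}" by (auto simp: abs_less_iff)
        thus "U v F y \<le> U v F b" using bmax by auto
      qed
    qed
    hence fb: "f b / F b = 1 / (v - b)" using Fb bv by (simp add: field_simps)
    define g where "g x = ln (F x) - (x - b) / (v - b)" for x
    have Fpos: "\<And>x. b \<le> x \<Longrightarrow> x \<le> v \<Longrightarrow> F x > 0"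
    proof -
      fix x assume "b \<le> x" "x \<le> v"
      hence "F b \<le> F x" using mono b01 assms(2) by (auto intro: mono_onD)
      thus "F x > 0" using Fb by simp
    qed
    have "g b \<ge> g v"
    proof (rule DERIV_nonpos_imp_decreasing_open[of b v g])
      show "b \<le> v" using bv by simp
      show "continuous_on {b..v} g"
      proof -
        have "continuous_on {b..v} F"
          using continuous_on_subset[OF contF] b01 assms(2) by auto
        thus ?thesis unfolding g_def using Fpos bv
          by (intro continuous_intros) (auto, metis less_irrefl)
      qed
      fix x assume x: "b < x" "x < v"
      have "(g has_real_derivative (f x / F x - 1 / (v - b))) (at x)"
        unfolding g_def using derat[of x] x b0 assms(2) Fpos[of x] bv
        by (auto intro!: derivative_eq_intros)
      moreover have "f x / F x - 1 / (v - b) \<le> 0"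
        using dec[of b x] x b0 assms(2) fb by auto
      ultimately show "\<exists>y. (g has_real_derivative y) (at x) \<and> y \<le> 0" by blast
    qed
    hence "ln (F v) - 1 \<le> ln (F b)" unfolding g_def using bv by simp
    hence "exp (ln (F v) - 1) \<le> exp (ln (F b))" by simp
    hence "F v / exp 1 \<le> F b" using Fpos[of v] Fb bv by (simp add: exp_diff)
    thus ?thesis using bs by simp
  qed
qed

end
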